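(* Let $\pi$ be the algebra morphism from $\mathbb K\langle\langle A'\rangle\rangle$ to $\mathbb K\langle\langle X\rangle\rangle$, $X=\{x_1<x_2<\cdots\}$, defined by $a_{ij}\mapsto x_j$, and view it as a linear map on $\mathbf H_o$ via $\mathcal F\mapsto\pi(S'^{\mathcal F})$. Then for every ordered forest $\mathcal F$ on $[n]$, $$\pi(S'^{\mathcal F})=\sum_{u}\mathbf M_u,$$ the sum over packed words $u=u_1\cdots u_n$ such that $u_k<u_l$ whenever $k$ is the parent of $l$ in $\mathcal F$. Moreover $\pi(\mathbf H_o)=\mathbf{WQSym}$, and $\pi:\mathbf H_o\to\mathbf{WQSym}$ is a surjective morphism of Hopf algebras; thus $\mathbf{WQSym}$ is a quotient Hopf algebra of $\mathbf H_o$.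
   Context: An ordered forest on $n$ vertices is a rooted forest whose vertex set is $[n]$ with its natural order (labels unrelated to the tree structure), given by its roots and parent map. $\mathbf H_o$ is the Hopf algebra with basis the ordered forests, product = disjoint union with the second forest's labels shifted, coproduct by admissible cuts $\Delta(\mathcal F)=\sum_V\mathrm{Roo}_V\mathcal F\otimes\mathrm{Lea}_V\mathcal F$ (an admissible cut is an antichain $V$ for the descendant relation; $\mathrm{Lea}_V\mathcal F$ is the induced, order-standardized subforest on $V$ and its descendants, $\mathrm{Roo}_V\mathcal F$ that on the complement). Second realization: $A'=\{a_{ij}:1\le i\le j\}$, with $a_{hi}\prec a_{ij}$ whenever $h\le i<j$; a word $w_1\cdots w_n$ over $A'$ is $\mathcal F$-compatible if $w_k$ is a diagonal letter $a_{ii}$ for each root $k$ and $w_k\prec w_l$ whenever $k$ is the parent of $l$; $S'^{\mathcal F}$ is the sum of all $\mathcal F$-compatible words; the map $\mathcal F\mapsto S'^{\mathcal F}$ realizes $\mathbf H_o$ (product and coproduct, the latter through the $\prec$-sum $A'\oplus B'$ in which additionally $a\prec b_{ii}$ for all $a\in A'$). A word over positive integers is packed if the set of its letters is $\{1,\dots,m\}$ for some $m$; $\mathrm{pack}(w)$ replaces the $r$-th smallest letter of $w$ by $r$. Identifying $x_i$ with $i$, $\mathbf M_u=\sum_{\mathrm{pack}(w)=u}w$ for packed $u$. $\mathbf{WQSym}$ is the span of the $\mathbf M_u$, with ordinary product and coproduct $\Delta\mathbf M_u=\sum_{k=0}^{m}\mathbf M_{u_{|[1,k]}}\otimes\mathbf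 M_{\mathrm{pack}(u_{|[k+1,m]})}$, where $m=\max(u)$ and $u_{|J}$ is the subword of letters in $J$ (equivalently, $\Delta F=F(X\oplus Y)$ for the ordinal sum $X<Y$). *)

theory Defs
  imports Complex_Main "HOL-Library.Function_Algebras"
begin

text \<open>An ordered forest on [n] is a pair (n, par), where par k = Some p means that p is the
parent of vertex k, and par k = None means that k is a root (for k in {1..n});
outside {1..n} par is None (normalisation, so that equal forests are equal pairs).\<close>

type_synonym forest = "nat \<times> (nat \<Rightarrow> nat option)"

definition edges :: "(nat \<Rightarrow> nat option) \<Rightarrow> (nat \<times> nat) set" where
  "edges par = {(p, c). par c = Some p}"

definition is_oforest :: "forest \<Rightarrow> bool" where
  "is_oforest F \<longleftrightarrow>
     (let n = fst F; par = snd F in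
       (\<forall>k. k \<notin> {1..n} \<longrightarrow> par k = None) \<and>
       (\<forall>k p. par k = Some p \<longrightarrow> p \<in> {1..n}) \<and>
       acyclic (edges par))"

definition empty_forest :: forest where
  "empty_forest = (0, \<lambda>_. None)"

text \<open>Product of H_o: disjoint union, the labels of the second forest shifted.\<close>
definition forest_prod :: "forest \<Rightarrow> forest \<Rightarrow> forest" where
  "forest_prod F G = (fst F + fst G,
     \<lambda>k. if 1 \<le> k \<and> k \<le> fst F then snd F k
         else if fst F < k \<and> k \<le> fst F + fst G then map_option (\<lambda>x. x + fst F) (snd G (k - fst F))
         else None)"

text \<open>Descendant relation: l is a (proper) descendant of k iff (k,l) in (edges par)^+.\<close>
definition admissible_cut :: "forest \<Rightarrow> nat set \<Rightarrow> bool" where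
  "admissible_cut F V \<longleftrightarrow> V \<subseteq> {1..fst F} \<and>
     (\<forall>k\<in>V. \<forall>l\<in>V. (k, l) \<notin> (edges (snd F))\<^sup>+)"

definition desc_closure :: "forest \<Rightarrow> nat set \<Rightarrow> nat set" where
  "desc_closure F V = {l. \<exists>v\<in>V. (v, l) \<in> (edges (snd F))\<^sup>*}"

text \<open>Induced, order-standardized subforest on a vertex set S \<subseteq> [n]:
  the vertex of rank j in S becomes vertex j; a vertex keeps its parent if the parent
  lies in S, otherwise it becomes a root.\<close>
definition rank :: "nat set \<Rightarrow> nat \<Rightarrow> nat" where
  "rank S k = card {x \<in> S. x \<le> k}"

definition induced_std :: "forest \<Rightarrow> nat set \<Rightarrow> forest" where
  "induced_std F S = (card S,
     \<lambda>j. if 1 \<le> j \<and> j \<le> card S then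
           (let k = sorted_list_of_set S ! (j - 1) in
             (case snd F k of None \<Rightarrow> None
              | Some p \<Rightarrow> if p \<in> S then Some (rank S p) else None))
         else None)"

definition Lea :: "forest \<Rightarrow> nat set \<Rightarrow> forest" where
  "Lea F V = induced_std F (desc_closure F V)"

definition Roo :: "forest \<Rightarrow> nat set \<Rightarrow> forest" where
  "Roo F V = induced_std F ({1..fst F} - desc_closure F V)"

text \<open>Letters of A' are pairs (i,j) standing for a_ij with 1 \<le> i \<le> j; letters of X
  are positive integers (x_i identified with i). A series is the function giving the
  coefficient of each word. Tensor squares of series are functions of two words.\<close>

definition A'_letter :: "nat \<times> nat \<Rightarrow> bool" where
  "A'_letter a \<longleftrightarrow> 1 \<le> fst a \<and> fst a \<le> snd a"

text \<open>a_hi \<prec> a_ij whenever h \<le> i < j.\<close>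
definition prec :: "nat \<times> nat \<Rightarrow> nat \<times> nat \<Rightarrow> bool" where
  "prec a b \<longleftrightarrow> snd a = fst b \<and> fst a \<le> snd a \<and> fst b < snd b"

definition compatible :: "forest \<Rightarrow> (nat \<times> nat) list \<Rightarrow> bool" where
  "compatible F w \<longleftrightarrow> length w = fst F \<and> (\<forall>a\<in>set w. A'_letter a) \<and>
     (\<forall>k\<in>{1..fst F}. snd F k = None \<longrightarrow> fst (w ! (k - 1)) = snd (w ! (k - 1))) \<and>
     (\<forall>k l. snd F l = Some k \<longrightarrow> prec (w ! (k - 1)) (w ! (l - 1)))"

text \<open>S'^F: the sum of all F-compatible words.\<close>
definition S' :: "forest \<Rightarrow> (nat \<times> nat) list \<Rightarrow> 'k::field" where
  "S' F w = (if compatible F w then 1 else 0)"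

text \<open>The algebra morphism pi : a_ij \<mapsto> x_j, on series over A'.\<close>
definition pi_ser :: "((nat \<times> nat) list \<Rightarrow> 'k::field) \<Rightarrow> nat list \<Rightarrow> 'k" where
  "pi_ser f w = (\<Sum>v\<in>{v. map snd v = w \<and> (\<forall>a\<in>set v. A'_letter a)}. f v)"

definition piH :: "forest \<Rightarrow> nat list \<Rightarrow> 'k::field" where
  "piH F = pi_ser (S' F)"

definition ser_mult :: "(nat list \<Rightarrow> 'k::field) \<Rightarrow> (nat list \<Rightarrow> 'k) \<Rightarrow> nat list \<Rightarrow> 'k" where
  "ser_mult f g w = (\<Sum>i\<le>length w. f (take i w) * g (drop i w))"

definition ser_one :: "nat list \<Rightarrow> 'k::field" where
  "ser_one w = (if w = [] then 1 else 0)"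

definition ser_scale :: "'k::field \<Rightarrow> (nat list \<Rightarrow> 'k) \<Rightarrow> nat list \<Rightarrow> 'k" where
  "ser_scale c f = (\<lambda>w. c * f w)"

definition packed :: "nat list \<Rightarrow> bool" where
  "packed u \<longleftrightarrow> set u = {1..card (set u)}"

definition pack :: "nat list \<Rightarrow> nat list" where
  "pack w = map (\<lambda>x. card {y \<in> set w. y \<le> x}) w"

definition M :: "nat list \<Rightarrow> nat list \<Rightarrow> 'k::field" where
  "M u w = (if (\<forall>x\<in>set w. 1 \<le> x) \<and> pack w = u then 1 else 0)"

definition WQSym :: "(nat list \<Rightarrow> 'k::field) set" where
  "WQSym = module.span ser_scale {M u | u. packed u}"

definition restr :: "nat list \<Rightarrow> nat set \<Rightarrow> nat list" where
  "restr u J = filter (\<lambda>x. x \<in> J) u"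

text \<open>Coproduct of M_u, as an element of WQSym \<otimes> WQSym, realised as a function
  of pairs of words (M_u \<otimes> M_v \<mapsto> (w1,w2) \<mapsto> M_u w1 * M_v w2).\<close>
definition coprod_M :: "nat list \<Rightarrow> nat list \<Rightarrow> nat list \<Rightarrow> 'k::field" where
  "coprod_M u w1 w2 = (\<Sum>k\<le>Max (insert 0 (set u)).
      M (restr u {1..k}) w1 * M (pack (restr u {k+1..Max (insert 0 (set u))})) w2)"

text \<open>Coproduct on WQSym, extended linearly: an element f of WQSym equals
  \<Sum>_u f(u) M_u (sum over the finitely many packed u with f u \<noteq> 0).\<close>
definition wqsym_coprod :: "(nat list \<Rightarrow> 'k::field) \<Rightarrow> nat list \<Rightarrow> nat list \<Rightarrow> 'k" where
  "wqsym_coprod f w1 w2 = (\<Sum>u\<in>{u. packed u \<and> f u \<noteq> 0}. f u * coprod_M u w1 w2)"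

definition wqsym_counit :: "(nat list \<Rightarrow> 'k::field) \<Rightarrow> 'k" where
  "wqsym_counit f = f []"

text \<open>(pi \<otimes> pi)(\<Delta> F) for the coproduct of H_o by admissible cuts.\<close>
definition piH_coprod :: "forest \<Rightarrow> nat list \<Rightarrow> nat list \<Rightarrow> 'k::field" where
  "piH_coprod F w1 w2 = (\<Sum>V\<in>{V. admissible_cut F V}. piH (Roo F V) w1 * piH (Lea F V) w2)"

definition forest_words :: "forest \<Rightarrow> nat list set" where
  "forest_words F = {u. packed u \<and> length u = fst F \<and>
       (\<forall>k l. snd F l = Some k \<longrightarrow> u ! (k - 1) < u ! (l - 1))}"

end

theory Submission
  imports Defs
begin


lemma sum_fun_apply: "finite A \<Longrightarrow> (\<Sum>x\<in>A. f x) w = (\<Sum>x\<in>A. f x w)"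
  by (induction A rule: finite_induct) auto

lemma module_ser: "module (ser_scale :: 'k::field \<Rightarrow> (nat list \<Rightarrow> 'k) \<Rightarrow> _)"
  by unfold_locales (auto simp: ser_scale_def fun_eq_iff algebra_simps)

definition wfF :: "forest \<Rightarrow> bool" where
  "wfF F \<longleftrightarrow> (\<forall>k l. snd F l = Some k \<longrightarrow> k \<in> {1..fst F} \<and> l \<in> {1..fst F})"

definition okw :: "forest \<Rightarrow> nat list \<Rightarrow> bool" where
  "okw F w \<longleftrightarrow> length w = fst F \<and> (\<forall>x\<in>set w. 1 \<le> x) \<and>
     (\<forall>k l. snd F l = Some k \<longrightarrow> w!(k-1) < w!(l-1))"

lemma oforest_wf: "is_oforest F \<Longrightarrow> wfF F"
  unfolding is_oforest_def wfF_def Let_def by (metis option.distinct(1))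

lemma finite_lifts: "finite {v. map snd v = w \<and> (\<forall>a\<in>set v. A'_letter a)}"
proof -
  let ?B = "{0..Max (insert 0 (set w))}"
  have "{v. map snd v = w \<and> (\<forall>a\<in>set v. A'_letter a)} \<subseteq> {v. set v \<subseteq> ?B \<times> ?B \<and> length v = length w}"
  proof (rule subsetI)
    fix v assume "v \<in> {v. map snd v = w \<and> (\<forall>a\<in>set v. A'_letter a)}"
    hence v: "map snd v = w" "\<forall>a\<in>set v. A'_letter a" by auto
    have "a \<in> ?B \<times> ?B" if "a \<in> set v" for a
    proof -
      have "snd a \<in> set w" using that v(1) by auto
      hence "snd a \<le> Max (insert 0 (set w))" by simp
      moreover have "fst a \<le> snd a" using v that by (auto simp: A'_letter_def)
      ultimately show ?thesis by (cases a) auto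
    qed
    thus "v \<in> {v. set v \<subseteq> ?B \<times> ?B \<and> length v = length w}" using v(1) by auto
  qed
  moreover have "finite {v. set v \<subseteq> ?B \<times> ?B \<and> length v = length w}"
    by (rule finite_lists_length_eq) auto
  ultimately show ?thesis by (rule finite_subset)
qed

definition lift :: "forest \<Rightarrow> nat list \<Rightarrow> (nat \<times> nat) list" where
  "lift F w = map (\<lambda>i. (case snd F (Suc i) of None \<Rightarrow> w!i | Some k \<Rightarrow> w!(k-1), w!i)) [0..<length w]"

lemma lift_nth: "i < length w \<Longrightarrow> lift F w ! i = (case snd F (Suc i) of None \<Rightarrow> w!i | Some k \<Rightarrow> w!(k-1), w!i)"
  by (simp add: lift_def split: option.split)

lemma lift_len[simp]: "length (lift F w) = length w"
  by (simp add: lift_def)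

lemma lifts_eq:
  assumes wf: "wfF F"
  shows "{v. map snd v = w \<and> (\<forall>a\<in>set v. A'_letter a) \<and> compatible F v} = (if okw F w then {lift F w} else {})"
proof -
  have 1: "v = lift F w \<and> okw F w" if v: "map snd v = w" "\<forall>a\<in>set v. A'_letter a" "compatible F v" for v
  proof -
    have len: "length v = fst F" "length w = fst F" using v by (auto simp: compatible_def)
    have sn: "snd (v!i) = w!i" if "i < length v" for i using v that by auto
    have fs: "fst (v!i) = (case snd F (Suc i) of None \<Rightarrow> w!i | Some k \<Rightarrow> w!(k-1))" if i: "i < length v" for i
    proof (cases "snd F (Suc i)")
      case None
      have "\<forall>k\<in>{1..fst F}. snd F k = None \<longrightarrow> fst (v ! (k - 1)) = snd (v ! (k - 1))"
        using v(3) unfolding compatible_def by blast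
      moreover have "Suc i \<in> {1..fst F}" using i len by auto
      ultimately have "snd F (Suc i) = None \<longrightarrow> fst (v ! (Suc i - 1)) = snd (v ! (Suc i - 1))" by (rule bspec)
      hence "fst (v ! (Suc i - 1)) = snd (v ! (Suc i - 1))" using None by (rule mp)
      hence "fst (v ! i) = snd (v ! i)" by simp
      then show ?thesis using None sn[OF i] by simp
    next
      case (Some k)
      then have "prec (v!(k-1)) (v!(Suc i - 1))" using v(3) unfolding compatible_def by blast
      moreover have "k - 1 < length v" using wf Some len unfolding wfF_def by fastforce
      ultimately show ?thesis using Some sn by (simp add: prec_def)
    qed
    have "v = lift F w"
    proof (rule nth_equalityI)
      show "length v = length (lift F w)" using v(1) by auto
      fix i assume i: "i < length v"
      hence i': "i < length w" using v(1) by auto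
      show "v ! i = lift F w ! i" unfolding lift_nth[OF i'] using fs[OF i] sn[OF i]
        by (metis prod.collapse)
    qed
    moreover have "okw F w"
      unfolding okw_def
    proof (intro conjI allI impI ballI)
      show "length w = fst F" by (rule len(2))
    next
      fix x assume "x \<in> set w"
      then obtain a where "a \<in> set v" "x = snd a" using v(1) by auto
      then show "1 \<le> x" using v(2) by (auto simp: A'_letter_def)
    next
      fix k l assume e: "snd F l = Some k"
      then have "prec (v!(k-1)) (v!(l-1))" using v(3) unfolding compatible_def by blast
      moreover have "k - 1 < length v" "l - 1 < length v" using wf e len unfolding wfF_def by fastforce+
      ultimately show "w!(k-1) < w!(l-1)" using sn by (simp add: prec_def)
    qed
    ultimately show ?thesis by simp
  qed
  have 2: "map snd (lift F w) = w \<and> (\<forall>a\<in>set (lift F w). A'_letter a) \<and> compatible F (lift F w)" if ok: "okw F w"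
  proof -
    have len: "length w = fst F" using ok by (simp add: okw_def)
    have pos: "i < length w \<Longrightarrow> 1 \<le> w!i" for i using ok by (auto simp: okw_def)
    have ln: "i < length w" if "snd F (Suc i) = Some k" for i k using wf that len unfolding wfF_def by fastforce
    have kl: "k - 1 < length w" if "snd F l = Some k" for k l using wf that len unfolding wfF_def by fastforce
    have edge: "w!(k-1) < w!(l-1)" if "snd F l = Some k" for k l using ok that unfolding okw_def by blast
    have A: "A'_letter (lift F w ! i)" if "i < length w" for i
    proof (cases "snd F (Suc i)")
      case None thus ?thesis using that pos[OF that] by (simp add: lift_def A'_letter_def)
    next
      case (Some k)
      thus ?thesis using that pos[OF kl[OF Some]] edge[OF Some]
        by (simp add: lift_def A'_letter_def)
    qed
    show ?thesis
      unfolding compatible_def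
    proof (intro conjI allI impI ballI)
      show "map snd (lift F w) = w" by (rule nth_equalityI) (simp_all add: lift_nth)
      show "length (lift F w) = fst F" using len by simp
    next
      fix a assume "a \<in> set (lift F w)"
      then obtain i where "i < length w" "a = lift F w ! i" by (auto simp: in_set_conv_nth)
      then show "A'_letter a" using A by simp
    next
      fix a assume "a \<in> set (lift F w)"
      then obtain i where "i < length w" "a = lift F w ! i" by (auto simp: in_set_conv_nth)
      then show "A'_letter a" using A by simp
    next
      fix k assume k: "k \<in> {1..fst F}" "snd F k = None"
      hence "k - 1 < length w" "Suc (k - 1) = k" using len by auto
      then show "fst (lift F w ! (k - 1)) = snd (lift F w ! (k - 1))"
        using lift_nth[of "k-1" w F] k(2) by simp
    next
      fix k l assume e: "snd F l = Some k"
      have l: "l - 1 < length w" "Suc (l-1) = l" using wf e len unfolding wfF_def by fastforce+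
      have k: "k - 1 < length w" using kl[OF e] .
      have 1: "lift F w ! (l - 1) = (w!(k-1), w!(l-1))" using lift_nth[OF l(1), of F] l(2) e by simp
      have 2: "snd (lift F w ! (k - 1)) = w!(k-1)" using lift_nth[OF k, of F] by simp
      have 3: "fst (lift F w ! (k - 1)) \<le> snd (lift F w ! (k - 1))" using A[OF k] by (simp add: A'_letter_def)
      show "prec (lift F w ! (k - 1)) (lift F w ! (l - 1))"
        unfolding prec_def using 1 2 3 edge[OF e] by simp
    qed
  qed
  show ?thesis using 1 2 by auto
qed

lemma piH_char:
  assumes wf: "wfF F"
  shows "(piH F w :: 'k::field) = (if okw F w then 1 else 0)"
proof -
  let ?A = "{v. map snd v = w \<and> (\<forall>a\<in>set v. A'_letter a)}"
  have "(piH F w :: 'k) = (\<Sum>v\<in>?A. if compatible F v then 1 else 0)"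
    by (simp add: piH_def pi_ser_def S'_def)
  also have "\<dots> = (\<Sum>v\<in>{v\<in>?A. compatible F v}. 1)"
    by (rule sum.inter_filter[OF finite_lifts, symmetric])
  also have "{v\<in>?A. compatible F v} = (if okw F w then {lift F w} else {})"
    using lifts_eq[OF wf, of w] by auto
  finally show ?thesis by (simp add: Ball_def)
qed




lemma pack_len[simp]: "length (pack w) = length w"
  by (simp add: pack_def)

lemma pack_nth: "i < length w \<Longrightarrow> pack w ! i = card {y\<in>set w. y \<le> w!i}"
  by (simp add: pack_def)

lemma rk_less:
  fixes A :: "nat set"
  assumes "finite A" "x \<in> A" "y \<in> A"
  shows "card {z\<in>A. z \<le> x} < card {z\<in>A. z \<le> y} \<longleftrightarrow> x < y"
proof
  assume "x < y"
  hence "{z\<in>A. z \<le> x} \<subseteq> {z\<in>A. z \<le> y}" "y \<in> {z\<in>A. z \<le> y}" "y \<notin> {z\<in>A. z \<le> x}" using assms by auto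
  hence "{z\<in>A. z \<le> x} \<subset> {z\<in>A. z \<le> y}" by blast
  thus "card {z\<in>A. z \<le> x} < card {z\<in>A. z \<le> y}" using assms(1) by (intro psubset_card_mono) auto
next
  assume a: "card {z\<in>A. z \<le> x} < card {z\<in>A. z \<le> y}"
  show "x < y"
  proof (rule ccontr)
    assume "\<not> x < y"
    hence "{z\<in>A. z \<le> y} \<subseteq> {z\<in>A. z \<le> x}" by auto
    hence "card {z\<in>A. z \<le> y} \<le> card {z\<in>A. z \<le> x}" using assms(1) by (intro card_mono) auto
    thus False using a by simp
  qed
qed

lemma rk_inj: "finite (A::nat set) \<Longrightarrow> inj_on (\<lambda>x. card {z\<in>A. z \<le> x}) A"
proof (rule inj_onI)
  fix x y assume a: "finite A" "x \<in> A" "y \<in> A" "card {z\<in>A. z \<le> x} = card {z\<in>A. z \<le> y}"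
  show "x = y"
  proof (rule ccontr)
    assume "x \<noteq> y"
    hence "x < y \<or> y < x" by arith
    thus False using rk_less[OF a(1,2,3)] rk_less[OF a(1,3,2)] a(4) by auto
  qed
qed

lemma rk_image:
  fixes A :: "nat set"
  assumes "finite A"
  shows "(\<lambda>x. card {z\<in>A. z \<le> x}) ` A = {1..card A}"
proof (rule card_subset_eq)
  show "finite {1..card A}" by simp
  show "(\<lambda>x. card {z\<in>A. z \<le> x}) ` A \<subseteq> {1..card A}"
  proof
    fix y assume "y \<in> (\<lambda>x. card {z\<in>A. z \<le> x}) ` A"
    then obtain x where x: "x \<in> A" "y = card {z\<in>A. z \<le> x}" by auto
    have "{z\<in>A. z \<le> x} \<noteq> {}" using x by auto
    hence "card {z\<in>A. z \<le> x} \<ge> 1" using assms by (simp add: Suc_le_eq card_gt_0_iff)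
    moreover have "card {z\<in>A. z \<le> x} \<le> card A" using assms by (intro card_mono) auto
    ultimately show "y \<in> {1..card A}" using x by auto
  qed
  show "card ((\<lambda>x. card {z\<in>A. z \<le> x}) ` A) = card {1..card A}"
    using card_image[OF rk_inj[OF assms]] by simp
qed

lemma set_pack: "set (pack w) = {1..card (set w)}"
  unfolding pack_def using rk_image[of "set w"] by (simp add: image_image)

lemma card_set_pack: "card (set (pack w)) = card (set w)"
  by (simp add: set_pack)

lemma packed_pack: "packed (pack w)"
  by (simp add: packed_def set_pack)

lemma pack_less: "i < length w \<Longrightarrow> j < length w \<Longrightarrow> pack w ! i < pack w ! j \<longleftrightarrow> w!i < w!j"
  by (simp add: pack_nth rk_less)

lemma packed_pos: "packed u \<Longrightarrow> x \<in> set u \<Longrightarrow> 1 \<le> x"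
  unfolding packed_def by (metis atLeastAtMost_iff)

lemma pack_packed: "packed u \<Longrightarrow> pack u = u"
proof -
  assume p: "packed u"
  have "card {y\<in>set u. y \<le> x} = x" if "x \<in> set u" for x
  proof -
    obtain c where c: "set u = {1..c}" using p unfolding packed_def by blast
    have "{y\<in>set u. y \<le> x} = {1..x}" using that unfolding c by auto
    thus ?thesis by simp
  qed
  thus ?thesis unfolding pack_def by (intro map_idI) simp
qed

lemma pack_mono: "strict_mono (f::nat\<Rightarrow>nat) \<Longrightarrow> pack (map f w) = pack w"
proof -
  assume f: "strict_mono f"
  have "card {y\<in>f ` set w. y \<le> f x} = card {y\<in>set w. y \<le> x}" for x
  proof -
    have "{y\<in>f ` set w. y \<le> f x} = f ` {y\<in>set w. y \<le> x}"
      using f by (auto simp: strict_mono_less_eq)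
    moreover have "inj f" using f by (rule strict_mono_imp_inj_on)
    ultimately show ?thesis by (simp add: card_image inj_on_subset)
  qed
  thus ?thesis unfolding pack_def by simp
qed

lemma finite_FW: "finite (forest_words F)"
proof -
  have "forest_words F \<subseteq> {u. set u \<subseteq> {0..fst F} \<and> length u = fst F}"
  proof
    fix u assume "u \<in> forest_words F"
    hence u: "packed u" "length u = fst F" by (auto simp: forest_words_def)
    have "card (set u) \<le> fst F" using card_length[of u] u by simp
    obtain c where c: "set u = {1..c}" using u unfolding packed_def by blast
    have "c \<le> fst F" using card_length[of u] u c by simp
    thus "u \<in> {u. set u \<subseteq> {0..fst F} \<and> length u = fst F}" using u c by auto
  qed
  moreover have "finite {u. set u \<subseteq> {0..fst F} \<and> length u = fst F}"
    by (rule finite_lists_length_eq) simp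
  ultimately show ?thesis by (rule finite_subset)
qed

lemma pack_in_FW:
  assumes wf: "wfF F"
  shows "pack w \<in> forest_words F \<longleftrightarrow> length w = fst F \<and> (\<forall>k l. snd F l = Some k \<longrightarrow> w!(k-1) < w!(l-1))"
proof -
  have "(pack w ! (k-1) < pack w ! (l-1)) = (w!(k-1) < w!(l-1))" if "length w = fst F" "snd F l = Some k" for k l
  proof -
    have "k - 1 < length w" "l - 1 < length w" using wf that unfolding wfF_def by fastforce+
    thus ?thesis by (rule pack_less)
  qed
  thus ?thesis unfolding forest_words_def using packed_pack[of w] by auto
qed

lemma okw_pack: "wfF F \<Longrightarrow> okw F w \<longleftrightarrow> (\<forall>x\<in>set w. 1 \<le> x) \<and> pack w \<in> forest_words F"
  by (auto simp: okw_def pack_in_FW)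

lemma part1:
  assumes "is_oforest F"
  shows "(piH F :: nat list \<Rightarrow> 'k::field) = (\<lambda>w. \<Sum>u\<in>forest_words F. M u w)"
proof
  fix w
  have wf: "wfF F" using assms by (rule oforest_wf)
  have "(\<Sum>u\<in>forest_words F. (M u w :: 'k)) = (\<Sum>u\<in>forest_words F. if pack w = u then (if (\<forall>x\<in>set w. 1 \<le> x) then 1 else 0) else 0)"
    by (rule sum.cong) (auto simp: M_def)
  also have "\<dots> = (if pack w \<in> forest_words F then (if (\<forall>x\<in>set w. 1 \<le> x) then 1 else 0) else 0)"
    by (rule sum.delta'[OF finite_FW])
  also have "\<dots> = (if okw F w then 1 else 0)" using okw_pack[OF wf, of w] by auto
  finally show "(piH F w :: 'k) = (\<Sum>u\<in>forest_words F. M u w)" using piH_char[OF wf, of w, where 'k='k] by simp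
qed




lemma wf_empty: "wfF empty_forest"
  by (simp add: wfF_def empty_forest_def)

lemma part4: "(piH empty_forest :: nat list \<Rightarrow> 'k::field) = ser_one"
proof
  fix w
  have "okw empty_forest w \<longleftrightarrow> w = []" by (auto simp: okw_def empty_forest_def)
  thus "(piH empty_forest w :: 'k) = ser_one w"
    using piH_char[OF wf_empty, of w, where 'k='k] by (simp add: ser_one_def)
qed

lemma part6:
  assumes "is_oforest F"
  shows "wqsym_counit (piH F :: nat list \<Rightarrow> 'k::field) = (if fst F = 0 then 1 else 0)"
proof -
  have wf: "wfF F" using assms by (rule oforest_wf)
  have "okw F [] \<longleftrightarrow> fst F = 0"
  proof
    assume "fst F = 0"
    hence "snd F l \<noteq> Some k" for k l using wf unfolding wfF_def by force
    thus "okw F []" using \<open>fst F = 0\<close> by (auto simp: okw_def)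
  qed (auto simp: okw_def)
  thus ?thesis unfolding wqsym_counit_def using piH_char[OF wf, of "[]", where 'k='k] by simp
qed

lemma prod_par_cases:
  assumes "snd (forest_prod F G) l = Some k"
  shows "(1 \<le> l \<and> l \<le> fst F \<and> snd F l = Some k) \<or>
         (fst F < l \<and> l \<le> fst F + fst G \<and> (\<exists>k'. snd G (l - fst F) = Some k' \<and> k = k' + fst F))"
  using assms by (auto simp: forest_prod_def split: if_splits)

lemma prod_par_F: "wfF F \<Longrightarrow> snd F l = Some k \<Longrightarrow> snd (forest_prod F G) l = Some k"
  unfolding wfF_def forest_prod_def by auto

lemma prod_par_G: "wfF G \<Longrightarrow> snd G l = Some k \<Longrightarrow> snd (forest_prod F G) (l + fst F) = Some (k + fst F)"
  unfolding wfF_def forest_prod_def by auto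

lemma wf_prod:
  assumes F: "wfF F" and G: "wfF G"
  shows "wfF (forest_prod F G)"
  unfolding wfF_def
proof (intro allI impI)
  fix k l assume e: "snd (forest_prod F G) l = Some k"
  have fp: "fst (forest_prod F G) = fst F + fst G" by (simp add: forest_prod_def)
  from prod_par_cases[OF e] show "k \<in> {1..fst (forest_prod F G)} \<and> l \<in> {1..fst (forest_prod F G)}"
  proof
    assume "1 \<le> l \<and> l \<le> fst F \<and> snd F l = Some k"
    thus ?thesis using F fp unfolding wfF_def by fastforce
  next
    assume "fst F < l \<and> l \<le> fst F + fst G \<and> (\<exists>k'. snd G (l - fst F) = Some k' \<and> k = k' + fst F)"
    then obtain k' where "fst F < l" "l \<le> fst F + fst G" "snd G (l - fst F) = Some k'" "k = k' + fst F" by blast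
    thus ?thesis using G fp unfolding wfF_def by fastforce
  qed
qed

lemma okw_prod:
  assumes F: "wfF F" and G: "wfF G"
  shows "okw (forest_prod F G) w \<longleftrightarrow> length w = fst F + fst G \<and> okw F (take (fst F) w) \<and> okw G (drop (fst F) w)"
proof
  assume ok: "okw (forest_prod F G) w"
  have len: "length w = fst F + fst G" using ok by (simp add: okw_def forest_prod_def)
  have pos: "\<forall>x\<in>set w. 1 \<le> x" using ok by (simp add: okw_def)
  have ed: "snd (forest_prod F G) l = Some k \<Longrightarrow> w!(k-1) < w!(l-1)" for k l using ok by (simp add: okw_def)
  have "okw F (take (fst F) w)"
    unfolding okw_def
  proof (intro conjI allI impI ballI)
    show "length (take (fst F) w) = fst F" using len by simp
    show "1 \<le> x" if "x \<in> set (take (fst F) w)" for x using pos that by (meson in_set_takeD)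
    fix k l assume e: "snd F l = Some k"
    hence "k - 1 < fst F" "l - 1 < fst F" using F unfolding wfF_def by fastforce+
    thus "take (fst F) w ! (k - 1) < take (fst F) w ! (l - 1)" using ed[OF prod_par_F[OF F e]] by simp
  qed
  moreover have "okw G (drop (fst F) w)"
    unfolding okw_def
  proof (intro conjI allI impI ballI)
    show "length (drop (fst F) w) = fst G" using len by simp
    show "1 \<le> x" if "x \<in> set (drop (fst F) w)" for x using pos that by (meson in_set_dropD)
    fix k l assume e: "snd G l = Some k"
    hence "1 \<le> k" "k \<le> fst G" "1 \<le> l" "l \<le> fst G" using G unfolding wfF_def by auto
    moreover have "w ! (k + fst F - 1) < w ! (l + fst F - 1)" using ed[OF prod_par_G[OF G e]] .
    ultimately show "drop (fst F) w ! (k - 1) < drop (fst F) w ! (l - 1)" using len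
      by (simp add: add.commute)
  qed
  ultimately show "length w = fst F + fst G \<and> okw F (take (fst F) w) \<and> okw G (drop (fst F) w)" using len by simp
next
  assume a: "length w = fst F + fst G \<and> okw F (take (fst F) w) \<and> okw G (drop (fst F) w)"
  hence len: "length w = fst F + fst G" and oF: "okw F (take (fst F) w)" and oG: "okw G (drop (fst F) w)" by auto
  show "okw (forest_prod F G) w"
    unfolding okw_def
  proof (intro conjI allI impI ballI)
    show "length w = fst (forest_prod F G)" using len by (simp add: forest_prod_def)
  next
    fix x assume "x \<in> set w"
    hence "x \<in> set (take (fst F) w) \<or> x \<in> set (drop (fst F) w)"
      by (metis Un_iff append_take_drop_id set_append)
    thus "1 \<le> x" using oF oG by (auto simp: okw_def)
  next
    fix k l assume e: "snd (forest_prod F G) l = Some k"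
    from prod_par_cases[OF e] show "w ! (k - 1) < w ! (l - 1)"
    proof
      assume h: "1 \<le> l \<and> l \<le> fst F \<and> snd F l = Some k"
      hence "k - 1 < fst F" "l - 1 < fst F" using F unfolding wfF_def by fastforce+
      moreover have "take (fst F) w ! (k - 1) < take (fst F) w ! (l - 1)" using oF h by (simp add: okw_def)
      ultimately show ?thesis by simp
    next
      assume "fst F < l \<and> l \<le> fst F + fst G \<and> (\<exists>k'. snd G (l - fst F) = Some k' \<and> k = k' + fst F)"
      then obtain k' where h: "fst F < l" "snd G (l - fst F) = Some k'" "k = k' + fst F" by blast
      have "1 \<le> k'" "k' \<le> fst G" using G h(2) unfolding wfF_def by auto
      moreover have "drop (fst F) w ! (k' - 1) < drop (fst F) w ! (l - fst F - 1)" using oG h(2) unfolding okw_def by blast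
      moreover have "k - 1 = fst F + (k' - 1)" "l - 1 = fst F + (l - fst F - 1)" using h \<open>1 \<le> k'\<close> by arith+
      moreover have "fst F \<le> length w" using len by simp
      ultimately show ?thesis by simp
    qed
  qed
qed

lemma part3:
  assumes "is_oforest F" "is_oforest G"
  shows "(piH (forest_prod F G) :: nat list \<Rightarrow> 'k::field) = ser_mult (piH F) (piH G)"
proof
  fix w
  have F: "wfF F" and G: "wfF G" using assms by (auto intro: oforest_wf)
  let ?t = "(if okw F (take (fst F) w) then 1 else 0) * (if okw G (drop (fst F) w) then 1 else (0::'k))"
  have "ser_mult (piH F) (piH G) w = (\<Sum>i\<le>length w. (piH F (take i w) :: 'k) * piH G (drop i w))"
    by (simp add: ser_mult_def)
  also have "\<dots> = (\<Sum>i\<le>length w. if i = fst F then ?t else 0)"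
  proof (rule sum.cong)
    fix i assume i: "i \<in> {..length w}"
    show "(piH F (take i w) :: 'k) * piH G (drop i w) = (if i = fst F then ?t else 0)"
    proof (cases "i = fst F")
      case True thus ?thesis using piH_char[OF F, where 'k='k] piH_char[OF G, where 'k='k] by simp
    next
      case False
      hence "\<not> okw F (take i w)" using i by (auto simp: okw_def)
      thus ?thesis using False piH_char[OF F, of "take i w", where 'k='k] by simp
    qed
  qed simp
  also have "\<dots> = (if fst F \<le> length w then ?t else 0)" by (simp add: sum.delta)
  also have "\<dots> = (if okw (forest_prod F G) w then 1 else 0)"
    using okw_prod[OF F G, of w] by (auto simp: okw_def)
  also have "\<dots> = piH (forest_prod F G) w" using piH_char[OF wf_prod[OF F G], of w, where 'k='k] by simp
  finally show "(piH (forest_prod F G) w :: 'k) = ser_mult (piH F) (piH G) w" by simp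
qed




definition parU :: "nat list \<Rightarrow> nat \<Rightarrow> nat option" where
  "parU u l = (if 1 \<le> l \<and> l \<le> length u \<and> 2 \<le> u!(l-1)
      then Some (Suc (LEAST j. j < length u \<and> u!j = u!(l-1) - 1)) else None)"

definition FU :: "nat list \<Rightarrow> forest" where
  "FU u = (length u, parU u)"

lemma parU_Some:
  assumes p: "packed u" and e: "parU u l = Some k"
  shows "1 \<le> l \<and> l \<le> length u \<and> 2 \<le> u!(l-1) \<and> 1 \<le> k \<and> k \<le> length u \<and> u!(k-1) = u!(l-1) - 1"
proof -
  have l: "1 \<le> l" "l \<le> length u" "2 \<le> u!(l-1)" and k: "k = Suc (LEAST j. j < length u \<and> u!j = u!(l-1) - 1)"
    using e by (auto simp: parU_def split: if_splits)
  obtain c where c: "set u = {1..c}" using p unfolding packed_def by blast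
  have "u!(l-1) \<in> set u" using l by auto
  hence "u!(l-1) - 1 \<in> set u" using l(3) unfolding c by auto
  then obtain j where "j < length u \<and> u!j = u!(l-1) - 1" by (auto simp: in_set_conv_nth)
  hence "(LEAST j. j < length u \<and> u!j = u!(l-1) - 1) < length u \<and> u!(LEAST j. j < length u \<and> u!j = u!(l-1) - 1) = u!(l-1) - 1"
    by (rule LeastI)
  thus ?thesis using l k by auto
qed

lemma FU_oforest:
  assumes p: "packed u"
  shows "is_oforest (FU u)"
proof -
  have "edges (parU u) \<subseteq> inv_image less_than (\<lambda>p. u!(p-1))"
  proof
    fix x assume "x \<in> edges (parU u)"
    then obtain a b where x: "x = (a, b)" "parU u b = Some a" by (auto simp: edges_def)
    from parU_Some[OF p x(2)] show "x \<in> inv_image less_than (\<lambda>p. u!(p-1))" using x(1) by auto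
  qed
  hence "acyclic (edges (parU u))"
    by (rule acyclic_subset[OF wf_acyclic[OF wf_inv_image[OF wf_less_than]]])
  moreover have "parU u k = None" if "k \<notin> {1..length u}" for k using that by (auto simp: parU_def)
  moreover have "p \<in> {1..length u}" if "parU u k = Some p" for k p using parU_Some[OF p that] by auto
  ultimately show ?thesis unfolding is_oforest_def FU_def Let_def by auto
qed

lemma u_in_FU: "packed u \<Longrightarrow> u \<in> forest_words (FU u)"
  unfolding forest_words_def FU_def using parU_Some by fastforce

lemma FU_ge:
  assumes p: "packed u" and v: "v \<in> forest_words (FU u)"
  shows "i < length u \<Longrightarrow> u!i \<le> v!i"
proof -
  have vp: "packed v" and vl: "length v = length u"
    and ve: "\<And>k l. parU u l = Some k \<Longrightarrow> v!(k-1) < v!(l-1)"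
    using v by (auto simp: forest_words_def FU_def)
  have "\<forall>i<length u. u!i = t \<longrightarrow> t \<le> v!i" for t
  proof (induction t rule: less_induct)
    case (less t)
    show ?case
    proof (intro allI impI)
      fix i assume i: "i < length u" "u!i = t"
      show "t \<le> v!i"
      proof (cases "t \<le> 1")
        case True
        have "v!i \<in> set v" using i vl by auto
        thus ?thesis using packed_pos[OF vp] True by force
      next
        case False
        then obtain k where e: "parU u (Suc i) = Some k" using i by (auto simp: parU_def)
        from parU_Some[OF p e] have k: "1 \<le> k" "k \<le> length u" "u!(k-1) = t - 1" using i by auto
        have "t - 1 \<le> v!(k-1)" using less.IH[of "t-1"] False k by auto
        moreover have "v!(k-1) < v!i" using ve[OF e] by simp
        ultimately show ?thesis by arith
      qed
    qed
  qed
  thus "i < length u \<Longrightarrow> u!i \<le> v!i" by blast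
qed

lemma sum_list_bound:
  assumes "packed v"
  shows "sum_list v \<le> length v * length v"
proof -
  have "x \<le> length v" if "x \<in> set v" for x
  proof -
    obtain c where c: "set v = {1..c}" using assms unfolding packed_def by blast
    hence "c = card (set v)" by simp
    hence "c \<le> length v" using card_length by metis
    thus ?thesis using that c by auto
  qed
  hence "sum_list v \<le> sum_list (map (\<lambda>_. length v) v)"
    using sum_list_mono[of v "\<lambda>x. x" "\<lambda>_. length v"] by simp
  thus ?thesis by (simp add: sum_list_triv)
qed

lemma FU_sum_less:
  assumes p: "packed u" and v: "v \<in> forest_words (FU u)" and ne: "v \<noteq> u"
  shows "sum_list u < sum_list v"
proof -
  have vl: "length v = length u" using v by (auto simp: forest_words_def FU_def)
  have ge: "\<forall>i\<in>{..<length u}. u!i \<le> v!i" using FU_ge[OF p v] by auto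
  obtain i where "i < length u" "u!i \<noteq> v!i" using ne vl nth_equalityI by metis
  hence "\<exists>i\<in>{..<length u}. u!i < v!i" using ge by force
  hence "(\<Sum>i<length u. u!i) < (\<Sum>i<length u. v!i)"
    using ge by (intro sum_strict_mono_ex1) auto
  thus ?thesis by (simp add: sum_list_sum_nth vl atLeast0LessThan)
qed

lemma piH_sum_fun:
  assumes "is_oforest F"
  shows "(piH F :: nat list \<Rightarrow> 'k::field) = (\<Sum>u\<in>forest_words F. M u)"
proof
  fix w
  show "(piH F w :: 'k) = (\<Sum>u\<in>forest_words F. M u) w"
    unfolding sum_fun_apply[OF finite_FW] part1[OF assms, where 'k='k] ..
qed

lemma part2:
  "module.span ser_scale {piH F :: nat list \<Rightarrow> 'k::field | F. is_oforest F} = WQSym"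
proof -
  interpret ms: module "ser_scale :: 'k \<Rightarrow> (nat list \<Rightarrow> 'k) \<Rightarrow> _" by (rule module_ser)
  let ?P = "{piH F :: nat list \<Rightarrow> 'k | F. is_oforest F}"
  let ?Q = "{M u :: nat list \<Rightarrow> 'k | u. packed u}"
  have "?P \<subseteq> ms.span ?Q"
  proof
    fix f assume "f \<in> ?P"
    then obtain F where F: "is_oforest F" "f = piH F" by blast
    have "(\<Sum>u\<in>forest_words F. M u :: nat list \<Rightarrow> 'k) \<in> ms.span ?Q"
      by (intro ms.span_sum ms.span_base) (auto simp: forest_words_def)
    thus "f \<in> ms.span ?Q" using piH_sum_fun[OF F(1), where 'k='k] F(2) by simp
  qed
  hence 1: "ms.span ?P \<subseteq> ms.span ?Q" by (intro ms.span_minimal) auto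
  have "\<forall>u. packed u \<and> length u = n \<and> n * n - sum_list u = d \<longrightarrow> (M u :: nat list \<Rightarrow> 'k) \<in> ms.span ?P" for n d
  proof (induction d rule: less_induct)
    case (less d)
    show ?case
    proof (intro allI impI)
      fix u assume u: "packed u \<and> length u = n \<and> n * n - sum_list u = d"
      have fin: "finite (forest_words (FU u))" by (rule finite_FW)
      have uin: "u \<in> forest_words (FU u)" using u u_in_FU by blast
      have "(piH (FU u) :: nat list \<Rightarrow> 'k) = (\<Sum>v\<in>forest_words (FU u). M v)"
        by (rule piH_sum_fun[OF FU_oforest]) (use u in blast)
      also have "\<dots> = M u + (\<Sum>v\<in>forest_words (FU u) - {u}. M v)"
        by (rule sum.remove[OF fin uin])
      finally have eq: "M u = piH (FU u) - (\<Sum>v\<in>forest_words (FU u) - {u}. M v :: nat list \<Rightarrow> 'k)"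
        by (simp add: algebra_simps)
      have "piH (FU u) \<in> ms.span ?P" using FU_oforest u by (intro ms.span_base) blast
      moreover have "(\<Sum>v\<in>forest_words (FU u) - {u}. M v :: nat list \<Rightarrow> 'k) \<in> ms.span ?P"
      proof (intro ms.span_sum)
        fix v assume v: "v \<in> forest_words (FU u) - {u}"
        have vp: "packed v" "length v = n" using v u by (auto simp: forest_words_def FU_def)
        have "sum_list u < sum_list v" using FU_sum_less[of u v] u v by blast
        moreover have "sum_list v \<le> n * n" using sum_list_bound[OF vp(1)] vp by simp
        ultimately have "n * n - sum_list v < d" using u by linarith
        thus "M v \<in> ms.span ?P" using less.IH vp by blast
      qed
      ultimately show "M u \<in> ms.span ?P" unfolding eq by (rule ms.span_diff)
    qed
  qed
  hence "?Q \<subseteq> ms.span ?P" by blast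
  hence 2: "ms.span ?Q \<subseteq> ms.span ?P" by (intro ms.span_minimal) auto
  show ?thesis unfolding WQSym_def using 1 2 by blast
qed




lemma sl_sorted: "sorted_wrt (<) (sorted_list_of_set (T::nat set))"
  using strict_sorted_list_of_set[of T] by simp

lemma sl_rank:
  assumes T: "finite (T::nat set)" and j: "j < card T"
  shows "rank T (sorted_list_of_set T ! j) = Suc j"
proof -
  let ?L = "sorted_list_of_set T"
  have len: "length ?L = card T" using T by simp
  have st: "sorted_wrt (<) ?L" by (rule sl_sorted)
  have dist: "distinct ?L" using T by simp
  have "{x\<in>T. x \<le> ?L!j} = (!) ?L ` {..j}"
  proof
    show "{x\<in>T. x \<le> ?L!j} \<subseteq> (!) ?L ` {..j}"
    proof
      fix x assume x: "x \<in> {x\<in>T. x \<le> ?L!j}"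
      hence "x \<in> set ?L" using T by simp
      then obtain i where i: "i < length ?L" "x = ?L!i" by (auto simp: in_set_conv_nth)
      have "i \<le> j"
      proof (rule ccontr)
        assume "\<not> i \<le> j"
        hence "?L!j < ?L!i" using sorted_wrt_nth_less[OF st, of j i] i by simp
        thus False using x i by simp
      qed
      thus "x \<in> (!) ?L ` {..j}" using i by auto
    qed
  next
    show "(!) ?L ` {..j} \<subseteq> {x\<in>T. x \<le> ?L!j}"
    proof
      fix x assume "x \<in> (!) ?L ` {..j}"
      then obtain i where i: "i \<le> j" "x = ?L!i" by auto
      have "i < length ?L" using i j len by simp
      hence "x \<in> T" using i T by (metis nth_mem set_sorted_list_of_set)
      moreover have "x \<le> ?L!j"
      proof (cases "i = j")
        case False thus ?thesis using sorted_wrt_nth_less[OF st, of i j] i j len by simp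
      qed (use i in simp)
      ultimately show "x \<in> {x\<in>T. x \<le> ?L!j}" by simp
    qed
  qed
  moreover have "inj_on ((!) ?L) {..j}" using dist j len by (intro inj_on_nth) auto
  ultimately show ?thesis unfolding rank_def by (simp add: card_image)
qed

lemma sl_rank_inv:
  assumes T: "finite (T::nat set)" and p: "p \<in> T"
  shows "sorted_list_of_set T ! (rank T p - 1) = p \<and> 1 \<le> rank T p \<and> rank T p \<le> card T"
proof -
  have "p \<in> set (sorted_list_of_set T)" using T p by simp
  then obtain i where i: "i < length (sorted_list_of_set T)" "p = sorted_list_of_set T ! i"
    by (auto simp: in_set_conv_nth)
  have "i < card T" using i T by simp
  hence "rank T p = Suc i" using sl_rank[OF T] i by simp
  thus ?thesis using i \<open>i < card T\<close> by simp
qed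

lemma rank_inj: "finite (T::nat set) \<Longrightarrow> p \<in> T \<Longrightarrow> q \<in> T \<Longrightarrow> rank T p = rank T q \<Longrightarrow> p = q"
  by (metis sl_rank_inv)

lemma std_fst[simp]: "fst (induced_std F T) = card T"
  by (simp add: induced_std_def)

lemma std_par:
  assumes T: "finite (T::nat set)"
  shows "snd (induced_std F T) j = Some q \<longleftrightarrow>
    (\<exists>c p. c \<in> T \<and> p \<in> T \<and> snd F c = Some p \<and> j = rank T c \<and> q = rank T p)"
proof
  assume e: "snd (induced_std F T) j = Some q"
  hence j: "1 \<le> j" "j \<le> card T" by (auto simp: induced_std_def split: if_splits)
  let ?c = "sorted_list_of_set T ! (j - 1)"
  have c: "?c \<in> T" using j T by (metis Suc_diff_1 Suc_le_lessD length_sorted_list_of_set less_le_trans nth_mem set_sorted_list_of_set zero_less_one)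
  have rc: "rank T ?c = j" using sl_rank[OF T, of "j-1"] j by simp
  from e j obtain p where p: "snd F ?c = Some p" "p \<in> T" "q = rank T p"
    by (auto simp: induced_std_def Let_def split: option.splits if_splits)
  show "\<exists>c p. c \<in> T \<and> p \<in> T \<and> snd F c = Some p \<and> j = rank T c \<and> q = rank T p"
    using c rc p by metis
next
  assume "\<exists>c p. c \<in> T \<and> p \<in> T \<and> snd F c = Some p \<and> j = rank T c \<and> q = rank T p"
  then obtain c p where h: "c \<in> T" "p \<in> T" "snd F c = Some p" "j = rank T c" "q = rank T p" by blast
  have "sorted_list_of_set T ! (j - 1) = c" "1 \<le> j" "j \<le> card T" using sl_rank_inv[OF T h(1)] h(4) by auto
  thus "snd (induced_std F T) j = Some q" using h by (simp add: induced_std_def Let_def)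
qed

lemma wf_std:
  assumes T: "finite (T::nat set)"
  shows "wfF (induced_std F T)"
  unfolding wfF_def
proof (intro allI impI)
  fix k l assume "snd (induced_std F T) l = Some k"
  then obtain c p where h: "c \<in> T" "p \<in> T" "snd F c = Some p" "l = rank T c" "k = rank T p"
    using std_par[OF T] by blast
  show "k \<in> {1..fst (induced_std F T)} \<and> l \<in> {1..fst (induced_std F T)}"
    using sl_rank_inv[OF T h(1)] sl_rank_inv[OF T h(2)] h by simp
qed

lemma okw_std:
  assumes T: "finite (T::nat set)"
  shows "okw (induced_std F T) w \<longleftrightarrow> length w = card T \<and> (\<forall>x\<in>set w. 1 \<le> x) \<and>
     (\<forall>c p. c \<in> T \<longrightarrow> p \<in> T \<longrightarrow> snd F c = Some p \<longrightarrow> w!(rank T p - 1) < w!(rank T c - 1))"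
  unfolding okw_def std_fst std_par[OF T] by blast

lemma filter_sl:
  "filter P u = map (\<lambda>p. u!(p-1)) (sorted_list_of_set {p\<in>{1..length u}. P (u!(p-1))})"
proof -
  have u: "u = map (\<lambda>p. u!(p-1)) [1..<Suc (length u)]"
    by (rule nth_equalityI) (simp_all del: upt_Suc)
  have "filter P u = map (\<lambda>p. u!(p-1)) (filter (\<lambda>p. P (u!(p-1))) [1..<Suc (length u)])"
    by (subst u) (simp add: filter_map comp_def)
  moreover have "filter (\<lambda>p. P (u!(p-1))) [1..<Suc (length u)] = sorted_list_of_set {p\<in>{1..length u}. P (u!(p-1))}"
  proof (rule strict_sorted_equal)
    show "sorted_wrt (<) (filter (\<lambda>p. P (u!(p-1))) [1..<Suc (length u)])"
      by (rule sorted_wrt_filter) (simp del: upt_Suc)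
    show "sorted_wrt (<) (sorted_list_of_set {p\<in>{1..length u}. P (u!(p-1))})" by (rule sl_sorted)
    show "set (filter (\<lambda>p. P (u!(p-1))) [1..<Suc (length u)]) = set (sorted_list_of_set {p\<in>{1..length u}. P (u!(p-1))})"
      by (auto simp del: upt_Suc)
  qed
  ultimately show ?thesis by simp
qed




definition DC :: "forest \<Rightarrow> nat set set" where
  "DC F = {S. S \<subseteq> {1..fst F} \<and> (\<forall>p c. snd F c = Some p \<longrightarrow> p \<in> S \<longrightarrow> c \<in> S)}"

definition minD :: "forest \<Rightarrow> nat set \<Rightarrow> nat set" where
  "minD F S = {x\<in>S. \<forall>y\<in>S. (y, x) \<notin> (edges (snd F))\<^sup>+}"

context
  fixes F :: forest
  assumes of: "is_oforest F"
begin

lemma edges_range: "(a, b) \<in> edges (snd F) \<Longrightarrow> a \<in> {1..fst F} \<and> b \<in> {1..fst F}"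
  using oforest_wf[OF of] unfolding wfF_def edges_def by auto

lemma acyc: "acyclic (edges (snd F))"
  using of unfolding is_oforest_def Let_def by blast

lemma wfE: "wf (edges (snd F))"
proof (rule finite_acyclic_wf)
  have "edges (snd F) \<subseteq> {1..fst F} \<times> {1..fst F}" using edges_range by auto
  thus "finite (edges (snd F))" by (rule finite_subset) simp
qed (rule acyc)

lemma rtr_closed:
  assumes S: "S \<in> DC F" and xy: "(x, y) \<in> (edges (snd F))\<^sup>*" and x: "x \<in> S"
  shows "y \<in> S"
  using xy
proof (induction rule: rtrancl_induct)
  case base thus ?case using x .
next
  case (step y z)
  thus ?case using S unfolding DC_def edges_def by auto
qed

lemma dc_sub: "V \<subseteq> {1..fst F} \<Longrightarrow> desc_closure F V \<subseteq> {1..fst F}"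
proof
  fix l assume V: "V \<subseteq> {1..fst F}" and "l \<in> desc_closure F V"
  then obtain v where v: "v \<in> V" "(v, l) \<in> (edges (snd F))\<^sup>*" by (auto simp: desc_closure_def)
  from v(2) show "l \<in> {1..fst F}"
  proof (cases rule: rtranclE)
    case base thus ?thesis using v V by auto
  next
    case (step y) thus ?thesis using edges_range by blast
  qed
qed

lemma dc_in_DC: "admissible_cut F V \<Longrightarrow> desc_closure F V \<in> DC F"
  unfolding DC_def
proof (intro CollectI conjI allI impI)
  assume a: "admissible_cut F V"
  thus "desc_closure F V \<subseteq> {1..fst F}" using dc_sub by (simp add: admissible_cut_def)
  fix p c assume e: "snd F c = Some p" and p: "p \<in> desc_closure F V"
  then obtain v where v: "v \<in> V" "(v, p) \<in> (edges (snd F))\<^sup>*" by (auto simp: desc_closure_def)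
  have pc: "(p, c) \<in> edges (snd F)" using e by (simp add: edges_def)
  have "(v, c) \<in> (edges (snd F))\<^sup>*" by (rule rtrancl_into_rtrancl[OF v(2) pc])
  thus "c \<in> desc_closure F V" using v(1) unfolding desc_closure_def by blast
qed

lemma minD_dc:
  assumes a: "admissible_cut F V"
  shows "minD F (desc_closure F V) = V"
proof
  show "minD F (desc_closure F V) \<subseteq> V"
  proof
    fix x assume "x \<in> minD F (desc_closure F V)"
    hence x: "x \<in> desc_closure F V" "\<forall>y\<in>desc_closure F V. (y, x) \<notin> (edges (snd F))\<^sup>+"
      by (auto simp: minD_def)
    then obtain v where v: "v \<in> V" "(v, x) \<in> (edges (snd F))\<^sup>*" by (auto simp: desc_closure_def)
    have "v \<in> desc_closure F V" using v(1) by (auto simp: desc_closure_def)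
    hence "v = x" using rtranclD[OF v(2)] x(2) by blast
    thus "x \<in> V" using v by simp
  qed
next
  show "V \<subseteq> minD F (desc_closure F V)"
  proof
    fix x assume x: "x \<in> V"
    have xd: "x \<in> desc_closure F V" using x by (auto simp: desc_closure_def)
    have "(y, x) \<notin> (edges (snd F))\<^sup>+" if y: "y \<in> desc_closure F V" for y
    proof
      assume yx: "(y, x) \<in> (edges (snd F))\<^sup>+"
      obtain v where v: "v \<in> V" "(v, y) \<in> (edges (snd F))\<^sup>*" using y by (auto simp: desc_closure_def)
      have vx: "(v, x) \<in> (edges (snd F))\<^sup>+" using v(2) yx by (rule rtrancl_trancl_trancl)
      show False
      proof (cases "v = x")
        case True thus False using vx acyc by (simp add: acyclic_def)
      next
        case False thus False using a v(1) x vx by (auto simp: admissible_cut_def)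
      qed
    qed
    thus "x \<in> minD F (desc_closure F V)" using xd by (simp add: minD_def)
  qed
qed

lemma adm_minD: "S \<in> DC F \<Longrightarrow> admissible_cut F (minD F S)"
proof -
  assume S: "S \<in> DC F"
  have "minD F S \<subseteq> {1..fst F}" using S unfolding minD_def DC_def by blast
  moreover have "(k, l) \<notin> (edges (snd F))\<^sup>+" if "k \<in> minD F S" "l \<in> minD F S" for k l
    using that unfolding minD_def by blast
  ultimately show ?thesis unfolding admissible_cut_def by blast
qed

lemma dc_minD:
  assumes S: "S \<in> DC F"
  shows "desc_closure F (minD F S) = S"
proof
  show "desc_closure F (minD F S) \<subseteq> S"
  proof
    fix l assume "l \<in> desc_closure F (minD F S)"
    then obtain v where "v \<in> minD F S" "(v, l) \<in> (edges (snd F))\<^sup>*" by (auto simp: desc_closure_def)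
    thus "l \<in> S" using rtr_closed[OF S] by (auto simp: minD_def)
  qed
next
  show "S \<subseteq> desc_closure F (minD F S)"
  proof
    fix x assume x: "x \<in> S"
    let ?Q = "{y\<in>S. (y, x) \<in> (edges (snd F))\<^sup>*}"
    have xQ: "x \<in> ?Q" using x by simp
    have "\<exists>z\<in>?Q. \<forall>y. (y, z) \<in> (edges (snd F))\<^sup>+ \<longrightarrow> y \<notin> ?Q"
      using wf_eq_minimal[THEN iffD1, OF wf_trancl[OF wfE], rule_format, OF xQ] .
    then obtain z where z: "z \<in> ?Q" "\<And>y. (y, z) \<in> (edges (snd F))\<^sup>+ \<Longrightarrow> y \<notin> ?Q"
      by blast
    have "z \<in> minD F S"
    proof -
      have "(y, z) \<notin> (edges (snd F))\<^sup>+" if "y \<in> S" for y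
      proof
        assume yz: "(y, z) \<in> (edges (snd F))\<^sup>+"
        have "(z, x) \<in> (edges (snd F))\<^sup>*" using z(1) by simp
        hence "(y, x) \<in> (edges (snd F))\<^sup>*" using trancl_into_rtrancl[OF yz] by (rule rtrancl_trans[rotated])
        thus False using z(2)[OF yz] that by simp
      qed
      thus ?thesis using z(1) by (simp add: minD_def)
    qed
    moreover have "(z, x) \<in> (edges (snd F))\<^sup>*" using z(1) by simp
    ultimately show "x \<in> desc_closure F (minD F S)" unfolding desc_closure_def by blast
  qed
qed

lemma bij_dc: "bij_betw (desc_closure F) {V. admissible_cut F V} (DC F)"
proof (rule bij_betw_byWitness[where f' = "minD F"])
  show "\<forall>a\<in>{V. admissible_cut F V}. minD F (desc_closure F a) = a" using minD_dc by blast
  show "\<forall>a'\<in>DC F. desc_closure F (minD F a') = a'" using dc_minD by blast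
  show "desc_closure F ` {V. admissible_cut F V} \<subseteq> DC F" using dc_in_DC by blast
  show "minD F ` DC F \<subseteq> {V. admissible_cut F V}" using adm_minD by blast
qed

lemma coprod_DC:
  "(piH_coprod F w1 w2 :: 'k::field) =
   (\<Sum>S\<in>DC F. piH (induced_std F ({1..fst F} - S)) w1 * piH (induced_std F S) w2)"
  unfolding piH_coprod_def Roo_def Lea_def
  by (rule sum.reindex_bij_betw[OF bij_dc])

end




lemma packedE: "packed u \<Longrightarrow> (\<And>c. set u = {1..c} \<Longrightarrow> card (set u) = c \<Longrightarrow> P) \<Longrightarrow> P"
  unfolding packed_def by (metis card_atLeastAtMost diff_Suc_1)

lemma packedI: "set u = {1..c} \<Longrightarrow> packed u"
  unfolding packed_def by simp

lemma max_packed: "packed u \<Longrightarrow> Max (insert 0 (set u)) = card (set u)"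
proof -
  assume "packed u"
  then obtain c where c: "set u = {1..c}" "card (set u) = c" by (rule packedE)
  show ?thesis
  proof (cases "c = 0")
    case True thus ?thesis using c by simp
  next
    case False thus ?thesis using c by (intro Max_eqI) auto
  qed
qed

definition cMp :: "nat list \<Rightarrow> nat list \<Rightarrow> nat list \<Rightarrow> bool" where
  "cMp u w1 w2 \<longleftrightarrow> (\<forall>x\<in>set w1. 1 \<le> x) \<and> (\<forall>x\<in>set w2. 1 \<le> x) \<and> card (set w1) \<le> card (set u) \<and>
     pack w1 = restr u {1..card (set w1)} \<and> pack w2 = pack (restr u {card (set w1) + 1..card (set u)})"

lemma set_restr_low: "packed u \<Longrightarrow> k \<le> card (set u) \<Longrightarrow> set (restr u {1..k}) = {1..k}"
proof -
  assume "packed u" "k \<le> card (set u)"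
  moreover obtain c where "set u = {1..c}" "card (set u) = c" using \<open>packed u\<close> by (rule packedE)
  ultimately show ?thesis by (auto simp: restr_def)
qed

lemma CM:
  assumes p: "packed u"
  shows "(coprod_M u w1 w2 :: 'k::field) = (if cMp u w1 w2 then 1 else 0)"
proof -
  let ?c = "card (set u)" and ?k0 = "card (set w1)"
  let ?t = "\<lambda>k. (M (restr u {1..k}) w1 :: 'k) * M (pack (restr u {k+1..?c})) w2"
  have "coprod_M u w1 w2 = (\<Sum>k\<le>?c. ?t k)"
    unfolding coprod_M_def max_packed[OF p] ..
  also have "\<dots> = (\<Sum>k\<le>?c. if k = ?k0 then ?t ?k0 else 0)"
  proof (rule sum.cong)
    fix k assume k: "k \<in> {..?c}"
    show "?t k = (if k = ?k0 then ?t ?k0 else 0)"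
    proof (cases "k = ?k0")
      case False
      have "pack w1 \<noteq> restr u {1..k}"
      proof
        assume "pack w1 = restr u {1..k}"
        hence "{1..?k0} = {1..k}" using set_pack[of w1] set_restr_low[OF p, of k] k by simp
        hence "card {1..?k0} = card {1..k}" by (rule arg_cong)
        thus False using False by (metis card_atLeastAtMost diff_Suc_1)
      qed
      thus ?thesis using False by (simp add: M_def)
    qed simp
  qed simp
  also have "\<dots> = (if ?k0 \<le> ?c then ?t ?k0 else 0)" by (simp add: sum.delta)
  also have "\<dots> = (if cMp u w1 w2 then 1 else 0)"
    unfolding cMp_def M_def by auto
  finally show ?thesis .
qed

lemma map_rank:
  assumes T: "finite (T::nat set)" and v: "length v = card T"
  shows "map (\<lambda>p. v ! (rank T p - 1)) (sorted_list_of_set T) = v"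
proof (rule nth_equalityI)
  show "length (map (\<lambda>p. v ! (rank T p - 1)) (sorted_list_of_set T)) = length v" using T v by simp
  fix i assume "i < length (map (\<lambda>p. v ! (rank T p - 1)) (sorted_list_of_set T))"
  hence i: "i < card T" using T by simp
  show "map (\<lambda>p. v ! (rank T p - 1)) (sorted_list_of_set T) ! i = v ! i"
    using i T sl_rank[OF T i] by simp
qed

lemma filter_nth_rank:
  assumes T: "T = {p\<in>{1..length u}. P (u!(p-1))}"
  shows "length (filter P u) = card T"
    and "p \<in> T \<Longrightarrow> filter P u ! (rank T p - 1) = u!(p-1)"
proof -
  have fin: "finite T" using T by simp
  have fs: "filter P u = map (\<lambda>p. u!(p-1)) (sorted_list_of_set T)" unfolding T by (rule filter_sl)
  show "length (filter P u) = card T" using fs fin by simp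
  assume p: "p \<in> T"
  from sl_rank_inv[OF fin p] have "rank T p - 1 < length (sorted_list_of_set T)"
    "sorted_list_of_set T ! (rank T p - 1) = p" using fin by auto
  thus "filter P u ! (rank T p - 1) = u!(p-1)" using fs by simp
qed

lemma restr_filter: "(\<forall>x\<in>set u. 1 \<le> x \<and> x \<le> c) \<Longrightarrow> restr u {a+1..c} = filter (\<lambda>x. a < x) u"
  unfolding restr_def by (rule filter_cong) auto

lemma restr_filter_low: "(\<forall>x\<in>set u. 1 \<le> x) \<Longrightarrow> restr u {1..a} = filter (\<lambda>x. x \<le> a) u"
  unfolding restr_def by (rule filter_cong) auto

lemma shift_packed:
  assumes z: "set z = {a+1..b}"
  shows "z = map (\<lambda>x. x + a) (pack z)"
proof -
  let ?z' = "map (\<lambda>x. x - a) z"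
  have zz: "z = map (\<lambda>x. x + a) ?z'" using z by (intro nth_equalityI) (auto, metis atLeastAtMost_iff nth_mem Suc_le_eq less_imp_le_nat le_add_diff_inverse2 add.commute)
  have "set ?z' = {1..b - a}"
  proof -
    have "set ?z' = (\<lambda>x. x - a) ` {a+1..b}" using z by simp
    also have "\<dots> = {1..b-a}"
    proof
      show "(\<lambda>x. x - a) ` {a + 1..b} \<subseteq> {1..b - a}" by auto
      show "{1..b - a} \<subseteq> (\<lambda>x. x - a) ` {a + 1..b}"
      proof
        fix y assume "y \<in> {1..b-a}"
        hence "y + a \<in> {a+1..b}" "y = (y + a) - a" by auto
        thus "y \<in> (\<lambda>x. x - a) ` {a + 1..b}" by blast
      qed
    qed
    finally show ?thesis .
  qed
  hence pz: "packed ?z'" by (rule packedI)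
  have "pack z = pack ?z'" by (subst zz) (rule pack_mono, simp add: strict_mono_def)
  also have "\<dots> = ?z'" by (rule pack_packed[OF pz])
  finally show ?thesis using zz by simp
qed




definition phiS :: "forest \<Rightarrow> nat list \<Rightarrow> nat list \<Rightarrow> nat set" where
  "phiS F w1 u = {p\<in>{1..fst F}. card (set w1) < u!(p-1)}"

definition Uf :: "forest \<Rightarrow> nat list \<Rightarrow> nat list \<Rightarrow> nat set \<Rightarrow> nat \<Rightarrow> nat" where
  "Uf F w1 w2 S p = (if p \<in> S then card (set w1) + pack w2 ! (rank S p - 1)
                     else pack w1 ! (rank ({1..fst F} - S) p - 1))"

definition psiU :: "forest \<Rightarrow> nat list \<Rightarrow> nat list \<Rightarrow> nat set \<Rightarrow> nat list" where
  "psiU F w1 w2 S = map (Uf F w1 w2 S) [1..<Suc (fst F)]"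

definition LHSset :: "forest \<Rightarrow> nat list \<Rightarrow> nat list \<Rightarrow> nat list set" where
  "LHSset F w1 w2 = {u \<in> forest_words F. cMp u w1 w2}"

definition RHSset :: "forest \<Rightarrow> nat list \<Rightarrow> nat list \<Rightarrow> nat set set" where
  "RHSset F w1 w2 = {S \<in> DC F. okw (induced_std F ({1..fst F} - S)) w1 \<and> okw (induced_std F S) w2}"

lemma psiU_nth: "p \<in> {1..fst F} \<Longrightarrow> psiU F w1 w2 S ! (p - 1) = Uf F w1 w2 S p"
proof -
  assume p: "p \<in> {1..fst F}"
  hence i: "p - 1 < length [1..<Suc (fst F)]" by auto
  have "[1..<Suc (fst F)] ! (p - 1) = p" using p by (subst nth_upt) auto
  thus ?thesis unfolding psiU_def nth_map[OF i] by simp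
qed

lemma psiU_len[simp]: "length (psiU F w1 w2 S) = fst F"
  unfolding psiU_def by (simp del: upt_Suc)

context
  fixes F :: forest and w1 w2 :: "nat list"
  assumes of: "is_oforest F"
begin

lemma wfF': "wfF F" using of by (rule oforest_wf)

lemma FW_facts:
  assumes "u \<in> forest_words F"
  shows "packed u" "length u = fst F" "\<And>k l. snd F l = Some k \<Longrightarrow> u!(k-1) < u!(l-1)"
  using assms by (auto simp: forest_words_def)

lemma LHS_facts:
  assumes u: "u \<in> LHSset F w1 w2"
  defines "S \<equiv> phiS F w1 u"
  defines "T \<equiv> {1..fst F} - S"
  shows "length w1 = card T \<and> (\<forall>p\<in>T. pack w1 ! (rank T p - 1) = u!(p-1))"
    and "length w2 = card S \<and> (\<forall>p\<in>S. card (set w1) + pack w2 ! (rank S p - 1) = u!(p-1))"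
proof -
  have fw: "u \<in> forest_words F" and cm: "cMp u w1 w2" using u by (auto simp: LHSset_def)
  note FW = FW_facts[OF fw]
  obtain c where c: "set u = {1..c}" "card (set u) = c" using FW(1) by (rule packedE)
  let ?k0 = "card (set w1)"
  have range: "\<forall>x\<in>set u. 1 \<le> x \<and> x \<le> c" using c by auto
  have Tdef: "T = {p\<in>{1..length u}. u!(p-1) \<le> ?k0}" unfolding T_def S_def phiS_def using FW(2) by auto
  have Sdef: "S = {p\<in>{1..length u}. ?k0 < u!(p-1)}" unfolding S_def phiS_def using FW(2) by auto
  have "pack w1 = restr u {1..?k0}" using cm by (simp add: cMp_def)
  also have "\<dots> = filter (\<lambda>x. x \<le> ?k0) u" using range by (intro restr_filter_low) auto
  finally have pw1: "pack w1 = filter (\<lambda>x. x \<le> ?k0) u" .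
  show "length w1 = card T \<and> (\<forall>p\<in>T. pack w1 ! (rank T p - 1) = u!(p-1))"
    using filter_nth_rank[OF Tdef] pw1 pack_len[of w1] by metis
  have "pack w2 = pack (restr u {?k0 + 1..c})" using cm c by (simp add: cMp_def)
  also have "restr u {?k0 + 1..c} = filter (\<lambda>x. ?k0 < x) u" using range by (rule restr_filter)
  finally have pw2: "pack w2 = pack (filter (\<lambda>x. ?k0 < x) u)" .
  let ?z = "filter (\<lambda>x. ?k0 < x) u"
  have "set ?z = {?k0 + 1..c}" using c by auto
  hence zz: "?z = map (\<lambda>x. x + ?k0) (pack w2)" unfolding pw2 by (rule shift_packed)
  have lz: "length ?z = card S" and nz: "\<And>p. p \<in> S \<Longrightarrow> ?z ! (rank S p - 1) = u!(p-1)"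
    using filter_nth_rank[OF Sdef] by auto
  have "length w2 = card S" using lz zz by (metis length_map pack_len)
  moreover have "?k0 + pack w2 ! (rank S p - 1) = u!(p-1)" if p: "p \<in> S" for p
  proof -
    have fin: "finite S" unfolding S_def phiS_def by simp
    have r: "1 \<le> rank S p" "rank S p \<le> card S" using sl_rank_inv[OF fin p] by auto
    have "rank S p - 1 < length (pack w2)" using r \<open>length w2 = card S\<close> by simp
    thus ?thesis using nz[OF p] zz by (metis add.commute nth_map)
  qed
  ultimately show "length w2 = card S \<and> (\<forall>p\<in>S. card (set w1) + pack w2 ! (rank S p - 1) = u!(p-1))" by blast
qed

lemma psi_phi: "u \<in> LHSset F w1 w2 \<Longrightarrow> psiU F w1 w2 (phiS F w1 u) = u"
proof -
  assume u: "u \<in> LHSset F w1 w2"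
  have fw: "u \<in> forest_words F" using u by (simp add: LHSset_def)
  note FW = FW_facts[OF fw]
  note L = LHS_facts[OF u]
  show ?thesis
  proof (rule nth_equalityI)
    show "length (psiU F w1 w2 (phiS F w1 u)) = length u" using FW(2) by simp
    fix i assume "i < length (psiU F w1 w2 (phiS F w1 u))"
    hence i: "Suc i \<in> {1..fst F}" by simp
    have "psiU F w1 w2 (phiS F w1 u) ! i = Uf F w1 w2 (phiS F w1 u) (Suc i)"
      using psiU_nth[OF i] by simp
    also have "\<dots> = u ! i"
    proof (cases "Suc i \<in> phiS F w1 u")
      case True thus ?thesis using L(2) by (simp add: Uf_def)
    next
      case False
      hence "Suc i \<in> {1..fst F} - phiS F w1 u" using i by simp
      thus ?thesis using L(1) False by (simp add: Uf_def)
    qed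
    finally show "psiU F w1 w2 (phiS F w1 u) ! i = u ! i" .
  qed
qed

lemma phi_RHS: "u \<in> LHSset F w1 w2 \<Longrightarrow> phiS F w1 u \<in> RHSset F w1 w2"
proof -
  assume u: "u \<in> LHSset F w1 w2"
  have fw: "u \<in> forest_words F" and cm: "cMp u w1 w2" using u by (auto simp: LHSset_def)
  note FW = FW_facts[OF fw]
  note L = LHS_facts[OF u]
  let ?S = "phiS F w1 u" and ?T = "{1..fst F} - phiS F w1 u"
  have finS: "finite ?S" by (simp add: phiS_def)
  have finT: "finite ?T" by simp
  have pos1: "\<forall>x\<in>set w1. 1 \<le> x" and pos2: "\<forall>x\<in>set w2. 1 \<le> x" using cm by (auto simp: cMp_def)
  have "?S \<in> DC F"
    unfolding DC_def
  proof (intro CollectI conjI allI impI)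
    show "?S \<subseteq> {1..fst F}" by (auto simp: phiS_def)
    fix p c assume e: "snd F c = Some p" and p: "p \<in> ?S"
    have "c \<in> {1..fst F}" using wfF' e unfolding wfF_def by blast
    moreover have "u!(p-1) < u!(c-1)" using FW(3)[OF e] .
    ultimately show "c \<in> ?S" using p by (auto simp: phiS_def)
  qed
  moreover have "okw (induced_std F ?T) w1"
    unfolding okw_std[OF finT]
  proof (intro conjI allI impI)
    show "length w1 = card ?T" using L(1) by simp
    show "\<forall>x\<in>set w1. 1 \<le> x" by (rule pos1)
    fix c p assume c: "c \<in> ?T" and p: "p \<in> ?T" and e: "snd F c = Some p"
    have ic: "rank ?T c - 1 < length w1" and ip: "rank ?T p - 1 < length w1"
      using sl_rank_inv[OF finT c] sl_rank_inv[OF finT p] L(1) by auto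
    have "pack w1 ! (rank ?T p - 1) < pack w1 ! (rank ?T c - 1)"
      using L(1) c p FW(3)[OF e] by simp
    thus "w1 ! (rank ?T p - 1) < w1 ! (rank ?T c - 1)" using pack_less[OF ip ic] by simp
  qed
  moreover have "okw (induced_std F ?S) w2"
    unfolding okw_std[OF finS]
  proof (intro conjI allI impI)
    show "length w2 = card ?S" using L(2) by simp
    show "\<forall>x\<in>set w2. 1 \<le> x" by (rule pos2)
    fix c p assume c: "c \<in> ?S" and p: "p \<in> ?S" and e: "snd F c = Some p"
    have ic: "rank ?S c - 1 < length w2" and ip: "rank ?S p - 1 < length w2"
      using sl_rank_inv[OF finS c] sl_rank_inv[OF finS p] L(2) by auto
    have "card (set w1) + pack w2 ! (rank ?S p - 1) < card (set w1) + pack w2 ! (rank ?S c - 1)"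
      using L(2) c p FW(3)[OF e] by simp
    hence "pack w2 ! (rank ?S p - 1) < pack w2 ! (rank ?S c - 1)" by simp
    thus "w2 ! (rank ?S p - 1) < w2 ! (rank ?S c - 1)" using pack_less[OF ip ic] by simp
  qed
  ultimately show ?thesis by (simp add: RHSset_def)
qed

end




context
  fixes F :: forest and w1 w2 :: "nat list"
  assumes of: "is_oforest F"
begin

lemma RHS_psi:
  assumes S: "S \<in> RHSset F w1 w2"
  shows "psiU F w1 w2 S \<in> LHSset F w1 w2 \<and> phiS F w1 (psiU F w1 w2 S) = S"
proof -
  let ?n = "fst F" and ?T = "{1..fst F} - S" and ?k0 = "card (set w1)" and ?c2 = "card (set w2)"
  let ?u = "psiU F w1 w2 S" and ?U = "Uf F w1 w2 S"
  have dc: "S \<in> DC F" and o1: "okw (induced_std F ?T) w1" and o2: "okw (induced_std F S) w2"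
    using S by (auto simp: RHSset_def)
  have Ssub: "S \<subseteq> {1..?n}" using dc by (simp add: DC_def)
  have finS: "finite S" using Ssub finite_subset by blast
  have finT: "finite ?T" by simp
  note O1 = o1[unfolded okw_std[OF finT]] and O2 = o2[unfolded okw_std[OF finS]]
  have len1: "length w1 = card ?T" and len2: "length w2 = card S" using O1 O2 by auto
  have uval: "\<And>p. p \<in> {1..?n} \<Longrightarrow> ?u ! (p - 1) = ?U p" by (rule psiU_nth)
  have iT: "rank ?T p - 1 < length w1" if "p \<in> ?T" for p
  proof -
    have "1 \<le> rank ?T p" "rank ?T p \<le> card ?T" using sl_rank_inv[OF finT that] by auto
    thus ?thesis using len1 by linarith
  qed
  have iS: "rank S p - 1 < length w2" if "p \<in> S" for p
  proof -
    have "1 \<le> rank S p" "rank S p \<le> card S" using sl_rank_inv[OF finS that] by auto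
    thus ?thesis using len2 by linarith
  qed
  have UT: "?U p = pack w1 ! (rank ?T p - 1) \<and> ?U p \<in> {1..?k0}" if p: "p \<in> ?T" for p
  proof -
    have "pack w1 ! (rank ?T p - 1) \<in> set (pack w1)" using iT[OF p] by simp
    thus ?thesis using p by (simp add: Uf_def set_pack)
  qed
  have US: "?U p = ?k0 + pack w2 ! (rank S p - 1) \<and> pack w2 ! (rank S p - 1) \<in> {1..?c2}" if p: "p \<in> S" for p
  proof -
    have "pack w2 ! (rank S p - 1) \<in> set (pack w2)" using iS[OF p] by simp
    thus ?thesis using p by (simp add: Uf_def set_pack)
  qed
  have setu: "set ?u = ?U ` {1..?n}" unfolding psiU_def by (simp del: upt_Suc) (auto simp del: upt_Suc)
  have setu2: "set ?u = {1..?k0 + ?c2}"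
  proof
    show "set ?u \<subseteq> {1..?k0 + ?c2}"
    proof
      fix y assume "y \<in> set ?u"
      then obtain p where p: "p \<in> {1..?n}" "y = ?U p" using setu by auto
      show "y \<in> {1..?k0 + ?c2}"
      proof (cases "p \<in> S")
        case True thus ?thesis using US[OF True] p by auto
      next
        case False thus ?thesis using UT[of p] p by auto
      qed
    qed
  next
    show "{1..?k0 + ?c2} \<subseteq> set ?u"
    proof
      fix y assume y: "y \<in> {1..?k0 + ?c2}"
      show "y \<in> set ?u"
      proof (cases "y \<le> ?k0")
        case True
        hence "y \<in> set (pack w1)" using y by (simp add: set_pack)
        then obtain j where j: "j < length w1" "pack w1 ! j = y" by (auto simp: in_set_conv_nth)
        let ?p = "sorted_list_of_set ?T ! j"
        have jT: "j < card ?T" using j len1 by simp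
        have pT: "?p \<in> ?T" using jT finT by (metis nth_mem length_sorted_list_of_set set_sorted_list_of_set)
        have "rank ?T ?p = Suc j" by (rule sl_rank[OF finT jT])
        hence "?U ?p = y" using UT[OF pT] j by simp
        thus ?thesis using pT setu by auto
      next
        case False
        hence "y - ?k0 \<in> set (pack w2)" using y by (auto simp: set_pack)
        then obtain j where j: "j < length w2" "pack w2 ! j = y - ?k0" by (auto simp: in_set_conv_nth)
        let ?p = "sorted_list_of_set S ! j"
        have jS: "j < card S" using j len2 by simp
        have pS: "?p \<in> S" using jS finS by (metis nth_mem length_sorted_list_of_set set_sorted_list_of_set)
        have "rank S ?p = Suc j" by (rule sl_rank[OF finS jS])
        hence "?U ?p = y" using US[OF pS] j False by simp
        thus ?thesis using pS Ssub setu by auto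
      qed
    qed
  qed
  have pk: "packed ?u" using setu2 by (rule packedI)
  have cu: "card (set ?u) = ?k0 + ?c2" using setu2 by simp
  have phi: "phiS F w1 ?u = S"
  proof
    show "phiS F w1 ?u \<subseteq> S"
    proof
      fix p assume "p \<in> phiS F w1 ?u"
      hence p: "p \<in> {1..?n}" "?k0 < ?u ! (p-1)" by (auto simp: phiS_def)
      show "p \<in> S"
      proof (rule ccontr)
        assume "p \<notin> S"
        thus False using UT[of p] p uval[OF p(1)] by auto
      qed
    qed
  next
    show "S \<subseteq> phiS F w1 ?u"
    proof
      fix p assume p: "p \<in> S"
      hence "p \<in> {1..?n}" using Ssub by auto
      thus "p \<in> phiS F w1 ?u" using US[OF p] uval p by (auto simp: phiS_def)
    qed
  qed
  have fw: "?u \<in> forest_words F"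
    unfolding forest_words_def
  proof (intro CollectI conjI allI impI)
    show "packed ?u" by (rule pk)
    show "length ?u = ?n" by simp
    fix k l assume e: "snd F l = Some k"
    have kl: "k \<in> {1..?n}" "l \<in> {1..?n}" using oforest_wf[OF of] e unfolding wfF_def by blast+
    have "?U k < ?U l"
    proof (cases "k \<in> S")
      case True
      hence lS: "l \<in> S" using dc e by (auto simp: DC_def)
      have "w2 ! (rank S k - 1) < w2 ! (rank S l - 1)" using O2 True lS e by blast
      hence "pack w2 ! (rank S k - 1) < pack w2 ! (rank S l - 1)" using pack_less[OF iS[OF True] iS[OF lS]] by simp
      thus ?thesis using US[OF True] US[OF lS] by simp
    next
      case False
      hence kT: "k \<in> ?T" using kl by simp
      show ?thesis
      proof (cases "l \<in> S")
        case True thus ?thesis using UT[OF kT] US[OF True] by auto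
      next
        case False
        hence lT: "l \<in> ?T" using kl by simp
        have "w1 ! (rank ?T k - 1) < w1 ! (rank ?T l - 1)" using O1 kT lT e by blast
        hence "pack w1 ! (rank ?T k - 1) < pack w1 ! (rank ?T l - 1)" using pack_less[OF iT[OF kT] iT[OF lT]] by simp
        thus ?thesis using UT[OF kT] UT[OF lT] by simp
      qed
    qed
    thus "?u ! (k - 1) < ?u ! (l - 1)" using uval kl by simp
  qed
  have posu: "\<forall>x\<in>set ?u. 1 \<le> x \<and> x \<le> ?k0 + ?c2" using setu2 by auto
  have phi': "\<And>p. p \<in> {1..?n} \<Longrightarrow> p \<in> S \<longleftrightarrow> ?k0 < ?u!(p-1)"
    using phi unfolding phiS_def by blast
  have lu: "length ?u = ?n" by simp
  have r1: "restr ?u {1..?k0} = pack w1"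
  proof -
    have "restr ?u {1..?k0} = filter (\<lambda>x. x \<le> ?k0) ?u" using posu by (intro restr_filter_low) auto
    also have "\<dots> = map (\<lambda>p. ?u!(p-1)) (sorted_list_of_set {p\<in>{1..length ?u}. ?u!(p-1) \<le> ?k0})"
      by (rule filter_sl)
    also have "{p\<in>{1..length ?u}. ?u!(p-1) \<le> ?k0} = ?T"
      unfolding lu using phi' by force
    also have "map (\<lambda>p. ?u!(p-1)) (sorted_list_of_set ?T) = map (\<lambda>p. pack w1 ! (rank ?T p - 1)) (sorted_list_of_set ?T)"
    proof (rule map_cong)
      fix p assume "p \<in> set (sorted_list_of_set ?T)"
      hence p: "p \<in> ?T" using finT by simp
      hence "p \<in> {1..?n}" by simp
      thus "?u!(p-1) = pack w1 ! (rank ?T p - 1)" using uval UT[OF p] by simp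
    qed simp
    also have "\<dots> = pack w1" by (rule map_rank[OF finT]) (simp add: len1)
    finally show ?thesis .
  qed
  have r2: "pack (restr ?u {?k0 + 1..?k0 + ?c2}) = pack w2"
  proof -
    have "restr ?u {?k0 + 1..?k0 + ?c2} = filter (\<lambda>x. ?k0 < x) ?u" using posu by (rule restr_filter)
    also have "\<dots> = map (\<lambda>p. ?u!(p-1)) (sorted_list_of_set {p\<in>{1..length ?u}. ?k0 < ?u!(p-1)})"
      by (rule filter_sl)
    also have "{p\<in>{1..length ?u}. ?k0 < ?u!(p-1)} = S"
      unfolding lu using phi' Ssub by force
    also have "map (\<lambda>p. ?u!(p-1)) (sorted_list_of_set S) = map (\<lambda>x. ?k0 + x) (map (\<lambda>p. pack w2 ! (rank S p - 1)) (sorted_list_of_set S))"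
      unfolding map_map comp_def
    proof (rule map_cong)
      fix p assume "p \<in> set (sorted_list_of_set S)"
      hence p: "p \<in> S" using finS by simp
      hence "p \<in> {1..?n}" using Ssub by blast
      thus "?u!(p-1) = ?k0 + pack w2 ! (rank S p - 1)" using uval US[OF p] by simp
    qed simp
    also have "map (\<lambda>p. pack w2 ! (rank S p - 1)) (sorted_list_of_set S) = pack w2"
      by (rule map_rank[OF finS]) (simp add: len2)
    finally have "restr ?u {?k0 + 1..?k0 + ?c2} = map (\<lambda>x. ?k0 + x) (pack w2)" .
    hence "pack (restr ?u {?k0 + 1..?k0 + ?c2}) = pack (pack w2)"
      by (simp add: pack_mono strict_mono_def)
    thus ?thesis using pack_packed[OF packed_pack] by simp
  qed
  have "cMp ?u w1 w2"
    unfolding cMp_def using O1 O2 r1 r2 cu by auto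
  thus ?thesis using fw phi by (simp add: LHSset_def)
qed

lemma bij_LR: "bij_betw (phiS F w1) (LHSset F w1 w2) (RHSset F w1 w2)"
proof (rule bij_betw_byWitness[where f' = "psiU F w1 w2"])
  show "\<forall>a\<in>LHSset F w1 w2. psiU F w1 w2 (phiS F w1 a) = a" using psi_phi[OF of] by blast
  show "\<forall>a'\<in>RHSset F w1 w2. phiS F w1 (psiU F w1 w2 a') = a'" using RHS_psi by blast
  show "phiS F w1 ` LHSset F w1 w2 \<subseteq> RHSset F w1 w2" using phi_RHS[OF of] by blast
  show "psiU F w1 w2 ` RHSset F w1 w2 \<subseteq> LHSset F w1 w2" using RHS_psi by blast
qed

end




lemma sum_indicator: "finite A \<Longrightarrow> (\<Sum>x\<in>A. if P x then 1 else (0::'k::field)) = of_nat (card {x\<in>A. P x})"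
  by (simp add: sum.inter_filter[symmetric])

lemma finite_DC: "finite (DC F)"
proof -
  have "DC F \<subseteq> Pow {1..fst F}" by (auto simp: DC_def)
  thus ?thesis by (rule finite_subset) simp
qed

lemma part5:
  assumes of: "is_oforest F"
  shows "wqsym_coprod (piH F :: nat list \<Rightarrow> 'k::field) = piH_coprod F"
proof (intro ext)
  fix w1 w2
  have wf: "wfF F" using of by (rule oforest_wf)
  have pc: "(piH F u :: 'k) = (if okw F u then 1 else 0)" for u by (rule piH_char[OF wf])
  have setq: "{u. packed u \<and> (piH F u :: 'k) \<noteq> 0} = forest_words F"
  proof -
    have "packed u \<and> okw F u \<longleftrightarrow> u \<in> forest_words F" for u
    proof
      assume "packed u \<and> okw F u"
      thus "u \<in> forest_words F" using okw_pack[OF wf, of u] pack_packed[of u] by auto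
    next
      assume u: "u \<in> forest_words F"
      hence p: "packed u" by (simp add: forest_words_def)
      have "\<forall>x\<in>set u. 1 \<le> x" using packed_pos[OF p] by blast
      thus "packed u \<and> okw F u" using okw_pack[OF wf, of u] pack_packed[OF p] u p by simp
    qed
    thus ?thesis using pc by auto
  qed
  have "wqsym_coprod (piH F :: nat list \<Rightarrow> 'k) w1 w2 = (\<Sum>u\<in>forest_words F. (piH F u :: 'k) * coprod_M u w1 w2)"
    unfolding wqsym_coprod_def setq ..
  also have "\<dots> = (\<Sum>u\<in>forest_words F. if cMp u w1 w2 then 1 else 0)"
  proof (rule sum.cong)
    fix u assume u: "u \<in> forest_words F"
    hence p: "packed u" by (simp add: forest_words_def)
    have "okw F u" using okw_pack[OF wf, of u] pack_packed[OF p] u packed_pos[OF p] by simp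
    thus "(piH F u :: 'k) * coprod_M u w1 w2 = (if cMp u w1 w2 then 1 else 0)"
      using pc CM[OF p, where 'k='k] by simp
  qed simp
  also have "\<dots> = of_nat (card (LHSset F w1 w2))"
    unfolding LHSset_def by (rule sum_indicator[OF finite_FW])
  also have "card (LHSset F w1 w2) = card (RHSset F w1 w2)"
    by (rule bij_betw_same_card[OF bij_LR[OF of]])
  also have "(of_nat (card (RHSset F w1 w2)) :: 'k) =
      (\<Sum>S\<in>DC F. if okw (induced_std F ({1..fst F} - S)) w1 \<and> okw (induced_std F S) w2 then 1 else 0)"
    unfolding RHSset_def by (rule sum_indicator[OF finite_DC, symmetric])
  also have "\<dots> = (\<Sum>S\<in>DC F. (piH (induced_std F ({1..fst F} - S)) w1 :: 'k) * piH (induced_std F S) w2)"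
  proof (rule sum.cong)
    fix S assume S: "S \<in> DC F"
    hence "finite S" by (auto simp: DC_def intro: finite_subset)
    thus "(if okw (induced_std F ({1..fst F} - S)) w1 \<and> okw (induced_std F S) w2 then 1 else 0) =
        (piH (induced_std F ({1..fst F} - S)) w1 :: 'k) * piH (induced_std F S) w2"
      using piH_char[OF wf_std[of S F], of w2, where 'k='k] piH_char[OF wf_std[of "{1..fst F} - S" F], of w1, where 'k='k]
      by simp
  qed simp
  also have "\<dots> = piH_coprod F w1 w2" by (rule coprod_DC[OF of, symmetric])
  finally show "wqsym_coprod (piH F :: nat list \<Rightarrow> 'k) w1 w2 = piH_coprod F w1 w2" .
qed

theorem mainTheorem4:
  shows "(\<forall>F. is_oforest F \<longrightarrow>
            (piH F :: nat list \<Rightarrow> 'k::field) = (\<lambda>w. \<Sum>u\<in>forest_words F. M u w))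
       \<and> module.span ser_scale {piH F :: nat list \<Rightarrow> 'k | F. is_oforest F} = WQSym
       \<and> (\<forall>F G. is_oforest F \<longrightarrow> is_oforest G \<longrightarrow>
            (piH (forest_prod F G) :: nat list \<Rightarrow> 'k) = ser_mult (piH F) (piH G))
       \<and> (piH empty_forest :: nat list \<Rightarrow> 'k) = ser_one
       \<and> (\<forall>F. is_oforest F \<longrightarrow>
            wqsym_coprod (piH F :: nat list \<Rightarrow> 'k) = piH_coprod F)
       \<and> (\<forall>F. is_oforest F \<longrightarrow>
            wqsym_counit (piH F :: nat list \<Rightarrow> 'k) = (if fst F = 0 then 1 else 0))"
  using part1 part2 part3 part4 part5 part6 by blast


end
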